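(* In the setting of the context, let $(\omega,u,p)\in W\times V\times Q$ solve the continuous problem and $(\omega_h,u_h,p_h)\in W_h\times V_h\times Q_h$ solve the discrete problem. Then \[ \|\mathrm{d}(\omega-\omega_h)\|_{L^2\Lambda^{n-1}}\le\inf_{\tau_h\in W_h}\|\mathrm{d}(\omega-\tau_h)\|_{L^2\Lambda^{n-1}},\qquad \|\mathrm{d}(u-u_h)\|_{L^2\Lambda^{n}}\le\inf_{v_h\in V_h}\|\mathrm{d}(u-v_h)\|_{L^2\Lambda^{n}}. \]
   Context: $\Omega\subset\mathbb{R}^n$, $n\ge2$, bounded contractible domain. $L^2\Lambda^k(\Omega)$: square-integrable differential $k$-forms with inner product $(a,b)_\Omega=\int_\Omega a\wedge\star b$; $H\Lambda^k(\Omega)=\{a\in L^2\Lambda^k:\mathrm{d}a\in L^2\Lambda^{k+1}\}$; $\mathrm{d}$ exterior derivative, $\mathrm{d}^*$ codifferential, $\mathrm{tr}$ boundary trace. The boundary $\Gamma=\partial\Omega$ is split twice into disjoint parts $\Gamma=\Gamma_\omega\cup\Gamma_t=\Gamma_n\cup\Gamma_\pi$; $\Gamma_1=\Gamma_t\cap\Gamma_n$, $\Gamma_2=\Gamma_t\cap\Gamma_\pi$, $\Gamma_4=\Gamma_\omega\cap\Gamma_\pi$. $W=\{\tau\in H\Lambda^{n-2}:\mathrm{tr}\,\tau=0\text{ on }\Gamma_\omega\}$; $V=\{v\in H\Lambda^{n-1}:\mathrm{tr}\,v=0\text{ on }\Gamma_n\}$ (modulo $\mathrm{d}^*$-free forms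 if $\Gamma_4\ne\emptyset$); $Q=L^2\Lambda^n$ (modulo constants if $\Gamma_\pi=\emptyset$). $\mathsf{a}(\tau,\kappa)=(\tau,\kappa)_\Omega$, $\mathsf{b}(v,q)=(\mathrm{d}v,q)_\Omega$, $\mathsf{c}(\tau,v)=(\mathrm{d}\tau,v)_\Omega$, $\mathsf{e}(v,w)=(\mathrm{d}v,\mathrm{d}w)_\Omega$; for data $f\in L^2\Lambda^{n-1}$, $g\in L^2\Lambda^n$, $u_{b,t}\in H^{1/2}\Lambda^{n-1}(\Gamma_t)$, $\Pi_b\in H^{1/2}\Lambda^n(\Gamma_\pi)$: $\mathsf{f}(v)=(v,f)_\Omega+\int_{\Gamma_2\cup\Gamma_4}\mathrm{tr}\,v\wedge\Pi_b$, $\mathsf{g}(q)=(q,g)_\Omega$, $\mathsf{h}(\tau)=-\int_{\Gamma_1\cup\Gamma_2}\mathrm{tr}\,\tau\wedge u_{b,t}$. Continuous problem: find $(\omega,u,p)\in W\times V\times Q$ with $\mathsf{a}(\tau,\omega)-\mathsf{c}(\tau,u)=\mathsf{h}(\tau)$ $\forall\tau\in W$, $\mathsf{e}(v,u)+\mathsf{c}(\omega,v)+\mathsf{b}(v,p)=\mathsf{f}(v)$ $\forall v\in V$, $\mathsf{b}(u,q)=\mathsf{g}(q)$ $\forall q\in Q$. Discrete spaces: finite-dimensional $W_h\subset W$, $V_h\subset V$, $Q_h\subset Q$ with $\mathrm{d}W_h\subset V_h$ and $\mathrm{d}V_h=Q_h$ (compatible spaces, e.g. the paper's mimetic spectral element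 spaces). The discrete problem is the same system posed on $W_h\times V_h\times Q_h$ with test functions in $W_h\times V_h\times Q_h$. *)

theory Defs
  imports "HOL-Analysis.Analysis"
begin

text \<open>Abstract Hilbert-complex rendering of the mixed vorticity-velocity-pressure
  problem. The type 'a plays the role of L2 (n-2)-forms, 'b of L2 (n-1)-forms,
  'c of L2 n-forms; the L2 inner product is the type's inner product.
  dW :: 'a => 'b and dV :: 'b => 'c are the exterior derivatives on
  (n-2)- and (n-1)-forms.\<close>

definition mixed_solution ::
  "'a::real_inner set \<Rightarrow> 'b::real_inner set \<Rightarrow> 'c::real_inner set \<Rightarrow>
   ('a \<Rightarrow> 'b) \<Rightarrow> ('b \<Rightarrow> 'c) \<Rightarrow>
   ('a \<Rightarrow> real) \<Rightarrow> ('b \<Rightarrow> real) \<Rightarrow> ('c \<Rightarrow> real) \<Rightarrow>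
   'a \<Rightarrow> 'b \<Rightarrow> 'c \<Rightarrow> bool" where
  "mixed_solution W V Q dW dV h f g \<omega> u p \<longleftrightarrow>
     \<omega> \<in> W \<and> u \<in> V \<and> p \<in> Q \<and>
     (\<forall>\<tau>\<in>W. inner \<tau> \<omega> - inner (dW \<tau>) u = h \<tau>) \<and>
     (\<forall>v\<in>V. inner (dV v) (dV u) + inner (dW \<omega>) v + inner (dV v) p = f v) \<and>
     (\<forall>q\<in>Q. inner (dV u) q = g q)"

end

theory Submission
  imports Defs
begin

lemma norm_le_from_inner:
  fixes a b :: "'x::real_inner"
  assumes "inner a a = inner a b"
  shows "norm a \<le> norm b"
proof -
  have "norm a * norm a \<le> norm a * norm b"
  proof -
    have "inner a b \<le> norm a * norm b" by (rule norm_cauchy_schwarz)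
    moreover have "inner a a = norm a * norm a" by (metis power2_norm_eq_inner power2_eq_square)
    ultimately show ?thesis using assms by simp
  qed
  thus ?thesis
  proof (cases "norm a = 0")
    case True thus ?thesis by simp
  next
    case False hence "norm a > 0" by simp
    with \<open>norm a * norm a \<le> norm a * norm b\<close> show ?thesis by simp
  qed
qed

theorem proposition5p6:
  fixes W Wh :: "'a::real_inner set" and V Vh :: "'b::real_inner set"
    and Q Qh :: "'c::real_inner set"
    and dW :: "'a \<Rightarrow> 'b" and dV :: "'b \<Rightarrow> 'c"
    and h :: "'a \<Rightarrow> real" and f :: "'b \<Rightarrow> real" and g :: "'c \<Rightarrow> real"
    and \<omega> \<omega>h :: 'a and u uh :: 'b and p ph :: 'c
  assumes "linear dW" and "linear dV"
    and "subspace W" and "subspace V" and "subspace Q"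
    and "\<forall>\<tau>\<in>W. dV (dW \<tau>) = 0"
    and "subspace Wh" and "subspace Vh" and "subspace Qh"
    and "\<exists>B. finite B \<and> Wh = span B" and "\<exists>B. finite B \<and> Vh = span B"
    and "\<exists>B. finite B \<and> Qh = span B"
    and "Wh \<subseteq> W" and "Vh \<subseteq> V" and "Qh \<subseteq> Q"
    and "dW ` Wh \<subseteq> Vh" and "dV ` Vh = Qh"
    and "mixed_solution W V Q dW dV h f g \<omega> u p"
    and "mixed_solution Wh Vh Qh dW dV h f g \<omega>h uh ph"
  shows "norm (dW (\<omega> - \<omega>h)) \<le> (INF \<tau>h\<in>Wh. norm (dW (\<omega> - \<tau>h))) \<and>
         norm (dV (u - uh)) \<le> (INF vh\<in>Vh. norm (dV (u - vh)))"
  proof -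
  note ms1 = assms(18)[unfolded mixed_solution_def]
  note ms2 = assms(19)[unfolded mixed_solution_def]
  have wh: "\<omega>h \<in> Wh" and uhV: "uh \<in> Vh" using ms2 by auto
  have A: "norm (dW (\<omega> - \<omega>h)) \<le> norm (dW (\<omega> - t))" if t: "t \<in> Wh" for t
  proof -
    have s: "t - \<omega>h \<in> Wh" using assms(7) t wh by (simp add: subspace_diff)
    have sW: "t - \<omega>h \<in> W" using s assms(13) by auto
    have dv: "dW (t - \<omega>h) \<in> Vh" using s assms(16) by auto
    have z: "dV (dW (t - \<omega>h)) = 0" using assms(6) sW by auto
    have e1: "inner (dW \<omega>) (dW (t - \<omega>h)) = f (dW (t - \<omega>h))"
      proof -
      have "dW (t - \<omega>h) \<in> V" using dv assms(14) by auto
      with ms1 have "inner (dV (dW (t - \<omega>h))) (dV u) + inner (dW \<omega>) (dW (t - \<omega>h)) + inner (dV (dW (t - \<omega>h))) p = f (dW (t - \<omega>h))" by blast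
      thus ?thesis using z by simp
    qed
    have e2: "inner (dW \<omega>h) (dW (t - \<omega>h)) = f (dW (t - \<omega>h))"
      proof -
      from ms2 dv have "inner (dV (dW (t - \<omega>h))) (dV uh) + inner (dW \<omega>h) (dW (t - \<omega>h)) + inner (dV (dW (t - \<omega>h))) ph = f (dW (t - \<omega>h))" by blast
      thus ?thesis using z by simp
    qed
    have o: "inner (dW (\<omega> - \<omega>h)) (dW (t - \<omega>h)) = 0"
      using e1 e2 linear_diff[OF assms(1), of \<omega> \<omega>h] by (simp add: inner_diff_left)
    have "dW (\<omega> - \<omega>h) = dW (\<omega> - t) + dW (t - \<omega>h)"
      using linear_add[OF assms(1), of "\<omega> - t" "t - \<omega>h"] by simp
    hence "inner (dW (\<omega> - \<omega>h)) (dW (\<omega> - \<omega>h)) = inner (dW (\<omega> - \<omega>h)) (dW (\<omega> - t))"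
      using o by (simp add: inner_add_right)
    thus ?thesis by (rule norm_le_from_inner)
  qed
  have B: "norm (dV (u - uh)) \<le> norm (dV (u - v))" if v: "v \<in> Vh" for v
  proof -
    have s: "v - uh \<in> Vh" using assms(8) v uhV by (simp add: subspace_diff)
    have q: "dV (v - uh) \<in> Qh" using s assms(17) by auto
    have e1: "inner (dV u) (dV (v - uh)) = g (dV (v - uh))" using ms1 q assms(15) by blast
    have e2: "inner (dV uh) (dV (v - uh)) = g (dV (v - uh))" using ms2 q by blast
    have o: "inner (dV (u - uh)) (dV (v - uh)) = 0"
      using e1 e2 linear_diff[OF assms(2), of u uh] by (simp add: inner_diff_left)
    have "dV (u - uh) = dV (u - v) + dV (v - uh)"
      using linear_add[OF assms(2), of "u - v" "v - uh"] by simp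
    hence "inner (dV (u - uh)) (dV (u - uh)) = inner (dV (u - uh)) (dV (u - v))"
      using o by (simp add: inner_add_right)
    thus ?thesis by (rule norm_le_from_inner)
  qed
  have "Wh \<noteq> {}" using wh by auto
  moreover have "Vh \<noteq> {}" using uhV by auto
  ultimately show ?thesis
    by (intro conjI cINF_greatest) (use A B in auto)
qed

end
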